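(* Under the standing assumptions below, let $P\in M_2(\mathbb C)$ be a rank-one idempotent with $\theta(S_1)\subseteq\overline B_P(12\delta)\cup\overline B_{I-P}(12\delta)$, and set $S_p=\theta^{-1}(\overline B_P(12\delta))$, $S_q=\theta^{-1}(\overline B_{I-P}(12\delta))$. Let $e\in S_2$. If $f\in S_p$ then $ef\in S_p$; if $f\in S_q$ then $ef\in S_q$.
   Context: Standing assumptions: $S$ is a semilattice (commutative semigroup of idempotents), $0\le\delta<0.03$, and $\theta:S\to M_2(\mathbb C)$ satisfies $\|\theta(e)\theta(f)-\theta(ef)\|_{HS}\le\delta$ for all $e,f\in S$, where $\|A\|_{HS}=(\operatorname{tr}(A^*A))^{1/2}$. For $k\in\{0,1,2\}$, $S_k=\{x\in S:\ |\operatorname{tr}\theta(x)-k|<0.95\}$; these sets are pairwise disjoint and cover $S$. $\overline B_A(r)=\{B\in M_2(\mathbb C):\|A-B\|_{HS}\le r\}$. *)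

theory Defs
  imports "HOL-Analysis.Analysis"
begin

type_synonym cmat2 = "complex^2^2"

definition adj2 :: "cmat2 \<Rightarrow> cmat2" where
  "adj2 A = (\<chi> i j. cnj (A $ j $ i))"

definition hs_norm :: "cmat2 \<Rightarrow> real" where
  "hs_norm A = sqrt (Re (trace (adj2 A ** A)))"

definition closed_hs_ball :: "cmat2 \<Rightarrow> real \<Rightarrow> cmat2 set" where
  "closed_hs_ball A r = {B. hs_norm (A - B) \<le> r}"

definition Sk :: "('a \<Rightarrow> cmat2) \<Rightarrow> nat \<Rightarrow> 'a set" where
  "Sk \<theta> k = {x. cmod (trace (\<theta> x) - of_nat k) < 0.95}"

end

theory Submission
  imports Defs
begin


lemma sqrt2_le: "sqrt 2 \<le> (14143/10000)"
proof -
  have "sqrt 2 \<le> sqrt ((14143/10000)^2)" by (intro real_sqrt_le_mono) (simp add: power2_eq_square)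
  then show ?thesis by simp
qed

lemma scalar_common:
  fixes u \<tau> D :: complex and \<delta> :: real
  assumes d0: "0 \<le> \<delta>" "\<delta> < (3/100)" and tau: "cmod \<tau> \<le> sqrt 2 * \<delta>"
    and De: "D = u^2 * (1 - u^2 + 2*\<tau>)"
  shows "cmod \<tau> \<le> (4243/100000)" "cmod D = cmod (u^2) * cmod (1 - u^2 + 2*\<tau>)"
    "cmod (1 - u^2 + 2*\<tau>) \<ge> 1 - cmod (u^2) - 2 * cmod \<tau>"
    "cmod (1 - u^2 + 2*\<tau>) \<ge> cmod (1 - u^2) - 2 * cmod \<tau>"
    "cmod (1 - u^2) = cmod (u - 1) * cmod (u + 1)"
    "cmod (u^2) = cmod u * cmod u"
proof -
  have "sqrt 2 * \<delta> \<le> (14143/10000) * (3/100)"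
    using sqrt2_le d0 by (intro mult_mono) auto
  then show "cmod \<tau> \<le> (4243/100000)" using tau by simp
  show "cmod D = cmod (u^2) * cmod (1 - u^2 + 2*\<tau>)" using De by (simp add: norm_mult)
  have "cmod (1 - u^2 + 2*\<tau>) \<ge> cmod (1 - u^2) - cmod (2*\<tau>)"
    by (metis norm_diff_ineq diff_minus_eq_add)
  then show "cmod (1 - u^2 + 2*\<tau>) \<ge> cmod (1 - u^2) - 2 * cmod \<tau>" by (simp add: norm_mult)
  moreover have "cmod (1 - u^2) \<ge> 1 - cmod (u^2)"
    using norm_triangle_ineq2[of 1 "u^2"] by simp
  ultimately show "cmod (1 - u^2 + 2*\<tau>) \<ge> 1 - cmod (u^2) - 2 * cmod \<tau>" by linarith
  have "1 - u^2 = - ((u - 1) * (u + 1))" by (simp add: power2_eq_square algebra_simps)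
  then show "cmod (1 - u^2) = cmod (u - 1) * cmod (u + 1)" by (simp add: norm_mult)
  show "cmod (u^2) = cmod u * cmod u" by (simp add: norm_mult power2_eq_square)
qed

lemma scalarN:
  fixes u \<tau> D :: complex and \<delta> :: real
  assumes d0: "0 \<le> \<delta>" "\<delta> < (3/100)" and tau: "cmod \<tau> \<le> sqrt 2 * \<delta>"
    and Db: "cmod D \<le> 2*\<delta>^2" and De: "D = u^2 * (1 - u^2 + 2*\<tau>)" and u1: "cmod (u - 1) < (19/20)"
  shows "cmod (u - 1) \<le> (57/20) * \<delta>"
proof -
  note C = scalar_common[OF d0 tau De]
  define x where "x = cmod (u^2)"
  define y where "y = cmod \<tau>"
  define c where "c = cmod (1 - u^2 + 2*\<tau>)"
  have y: "y \<le> (4243/100000)" "0 \<le> y" using C(1) by (auto simp: y_def)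
  have Dx: "x * c \<le> (9/5000)"
  proof -
    have "\<delta>^2 \<le> (3/100)^2" using d0 by (intro power_mono) auto
    then show ?thesis using Db C(2) by (simp add: x_def c_def power2_eq_square)
  qed
  have cl: "c \<ge> 1 - x - 2*y" using C(3) by (simp add: x_def y_def c_def)
  have ug: "cmod u \<ge> (1/20)"
    using norm_triangle_ineq2[of 1 "1 - u"] u1 by (simp add: norm_minus_commute)
  have xg: "x \<ge> (1/400)"
  proof -
    have "cmod u * cmod u \<ge> (1/20) * (1/20)" using ug by (intro mult_mono) auto
    then show ?thesis using C(6) by (simp add: x_def)
  qed
  have xh: "x \<ge> 1/2"
  proof (rule ccontr)
    assume "\<not> x \<ge> 1/2"
    then have "(x - 1/400) * (1/2 - x) \<ge> 0" using xg by simp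
    moreover have "(x - 1/400) * (1/2 - x) = (201/400)*x - x*x - 1/800" by (simp add: field_simps)
    ultimately have f1: "x*x \<le> (201/400)*x - 1/800" by linarith
    have f2: "x * y \<le> (4243/100000) * x" using y xg by (simp add: mult_left_mono mult.commute)
    have "x * (1 - x - 2*y) \<le> x * c" using cl xg by (intro mult_left_mono) auto
    then have f3: "x - x*x - 2*(x*y) \<le> x * c" by (simp add: algebra_simps)
    have xg': "x \<ge> 1/400" using xg by simp
    have Dx': "x * c \<le> 9/5000" using Dx by simp
    show False using f1 f2 f3 xg' Dx' by linarith
  qed
  have cb: "c \<le> 4 * \<delta>^2"
  proof -
    have "(1/2) * c \<le> x * c" using xh by (intro mult_right_mono) (auto simp: c_def)
    then show ?thesis using Db C(2) by (simp add: x_def c_def)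
  qed
  have "cmod (u - 1) * cmod (u + 1) \<le> 4 * \<delta>^2 + 2 * y"
    using C(4) C(5) cb by (simp add: c_def y_def)
  moreover have "cmod (u + 1) \<ge> (21/20)"
    using norm_triangle_ineq4[of "u + 1" "u - 1"] u1 by simp
  moreover have "cmod (u - 1) * (21/20) \<le> cmod (u - 1) * cmod (u + 1)"
    using calculation(2) by (intro mult_left_mono) auto
  moreover have "y \<le> (14143/10000) * \<delta>"
  proof -
    have "sqrt 2 * \<delta> \<le> (14143/10000) * \<delta>" using sqrt2_le d0(1) by (rule mult_right_mono)
    then show ?thesis using tau by (simp add: y_def)
  qed
  moreover have "4 * \<delta>^2 \<le> (3/25) * \<delta>"
  proof -
    have "\<delta> * \<delta> \<le> (3/100) * \<delta>" using d0 by (intro mult_right_mono) auto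
    then show ?thesis by (simp add: power2_eq_square)
  qed
  ultimately show ?thesis using d0 by linarith
qed

lemma scalarT:
  fixes u \<tau> D :: complex and \<delta> :: real
  assumes d0: "0 \<le> \<delta>" "\<delta> < (3/100)" and tau: "cmod \<tau> \<le> sqrt 2 * \<delta>"
    and Db: "cmod D \<le> 2*\<delta>^2" and De: "D = u^2 * (1 - u^2 + 2*\<tau>)"
  shows "cmod (u + 1) < (19/20) \<or> cmod u < (19/20) \<or> cmod (u - 1) < (19/20)"
proof (rule ccontr)
  assume H: "\<not> ?thesis"
  note C = scalar_common[OF d0 tau De]
  have "cmod u * cmod u \<ge> (19/20) * (19/20)" using H by (intro mult_mono) auto
  then have x: "cmod (u^2) \<ge> (361/400)" using C(6) by simp
  have "cmod (u - 1) * cmod (u + 1) \<ge> (19/20) * (19/20)" using H by (intro mult_mono) auto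
  then have "cmod (1 - u^2) \<ge> (361/400)" using C(5) by simp
  then have "cmod (1 - u^2 + 2*\<tau>) \<ge> (4/5)" using C(1) C(4) by (simp; linarith)
  then have "cmod (u^2) * cmod (1 - u^2 + 2*\<tau>) \<ge> (361/400) * (4/5)" using x by (intro mult_mono) auto
  moreover have "\<delta>^2 \<le> (3/100)^2" using d0 by (intro power_mono) auto
  ultimately show False using Db C(2) by (simp add: power2_eq_square)
qed



lemma one_neq_two2: "(1::2) \<noteq> 2" by simp

lemma mm_entry: "((A::cmat2) ** B)$i$j = A$i$1 * B$1$j + A$i$2 * B$2$j"
  by (simp add: matrix_matrix_mult_def sum_2)

lemma tr2: "trace (A::cmat2) = A$1$1 + A$2$2"
  by (simp add: trace_def sum_2)

lemma normsq: "(norm (A::cmat2))^2 = (cmod (A$1$1))^2 + (cmod (A$1$2))^2 + (cmod (A$2$1))^2 + (cmod (A$2$2))^2"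
  by (simp add: norm_vec_def L2_set_def sum_2)

lemma cnj_mult_self: "Re (cnj z * z) = (cmod z)^2"
proof -
  have "Re (cnj z * z) = (Re z)^2 + (Im z)^2" by (simp add: power2_eq_square)
  then show ?thesis by (simp add: cmod_power2)
qed

lemma hs_eq: "hs_norm A = norm A"
proof -
  have "Re (trace (adj2 A ** A)) = (norm A)^2"
    unfolding normsq cmod_power2 by (simp add: adj2_def tr2 mm_entry power2_eq_square algebra_simps)
  then show ?thesis by (simp add: hs_norm_def)
qed

lemma cs2: "(cmod (x1*y1+x2*y2))^2 \<le> ((cmod x1)^2+(cmod x2)^2)*((cmod y1)^2+(cmod y2)^2)"
proof -
  have a: "cmod (x1*y1+x2*y2) \<le> cmod x1 * cmod y1 + cmod x2 * cmod y2"
    by (metis norm_mult norm_triangle_ineq)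
  have "(cmod (x1*y1+x2*y2))^2 \<le> (cmod x1 * cmod y1 + cmod x2 * cmod y2)^2"
    using a by (simp add: power_mono)
  also have "\<dots> \<le> ((cmod x1)^2+(cmod x2)^2)*((cmod y1)^2+(cmod y2)^2)"
  proof -
    have "0 \<le> (cmod x1 * cmod y2 - cmod x2 * cmod y1)^2" by simp
    then show ?thesis by (simp add: power2_eq_square algebra_simps)
  qed
  finally show ?thesis .
qed

lemma norm_mm: "norm ((A::cmat2) ** (B::cmat2)) \<le> norm A * norm B"
proof -
  have "(norm (A ** B))^2 \<le> (norm A * norm B)^2"
  proof -
    have "(norm (A ** B))^2 \<le> ((cmod (A$1$1))^2+(cmod (A$1$2))^2)*((cmod (B$1$1))^2+(cmod (B$2$1))^2)
      + ((cmod (A$1$1))^2+(cmod (A$1$2))^2)*((cmod (B$1$2))^2+(cmod (B$2$2))^2)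
      + ((cmod (A$2$1))^2+(cmod (A$2$2))^2)*((cmod (B$1$1))^2+(cmod (B$2$1))^2)
      + ((cmod (A$2$1))^2+(cmod (A$2$2))^2)*((cmod (B$1$2))^2+(cmod (B$2$2))^2)"
      unfolding normsq mm_entry by (intro add_mono cs2)
    also have "\<dots> = (norm A * norm B)^2"
      unfolding power_mult_distrib normsq by (simp only: algebra_simps)
    finally show ?thesis .
  qed
  then show ?thesis by (rule power2_le_imp_le) simp
qed

lemma tr_bound: "cmod (trace (A::cmat2)) \<le> sqrt 2 * norm A"
proof -
  have "(cmod (trace A))^2 \<le> (cmod (A$1$1) + cmod (A$2$2))^2"
    unfolding tr2 by (simp add: power_mono norm_triangle_ineq)
  also have "\<dots> \<le> 2 * (norm A)^2"
  proof -
    have "0 \<le> (cmod (A$1$1) - cmod (A$2$2))^2" by simp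
    then have "(cmod (A$1$1) + cmod (A$2$2))^2 \<le> 2 * (cmod (A$1$1))^2 + 2 * (cmod (A$2$2))^2"
      by (simp add: power2_eq_square algebra_simps)
    moreover have "0 \<le> (cmod (A$1$2))^2" "0 \<le> (cmod (A$2$1))^2" by simp_all
    ultimately show ?thesis unfolding normsq distrib_left by linarith
  qed
  also have "\<dots> = (sqrt 2 * norm A)^2" by (simp add: power_mult_distrib)
  finally show ?thesis by (rule power2_le_imp_le) simp
qed

definition det2 :: "cmat2 \<Rightarrow> complex" where
  "det2 A = A$1$1*A$2$2 - A$1$2*A$2$1"

lemma disc_bound: "cmod ((trace R)^2 - 4 * det2 R) \<le> 2 * (norm R)^2"
proof -
  have e: "(trace R)^2 - 4 * det2 R = (R$1$1 - R$2$2)^2 + 4 * (R$1$2 * R$2$1)"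
    unfolding tr2 det2_def by (simp add: power2_eq_square algebra_simps)
  have "cmod ((R$1$1 - R$2$2)^2 + 4 * (R$1$2 * R$2$1)) \<le> (cmod (R$1$1 - R$2$2))^2 + 4 * (cmod (R$1$2) * cmod (R$2$1))"
    using norm_triangle_ineq[of "(R$1$1 - R$2$2)^2" "4 * (R$1$2 * R$2$1)"] by (simp add: norm_mult norm_power)
  also have "\<dots> \<le> (cmod (R$1$1) + cmod (R$2$2))^2 + 4 * (cmod (R$1$2) * cmod (R$2$1))"
    by (simp add: power_mono norm_triangle_ineq4)
  also have "\<dots> \<le> 2 * (norm R)^2"
  proof -
    have "0 \<le> (cmod (R$1$1) - cmod (R$2$2))^2" by simp
    moreover have "0 \<le> (cmod (R$1$2) - cmod (R$2$1))^2" by simp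
    ultimately show ?thesis unfolding normsq by (simp add: power2_eq_square algebra_simps)
  qed
  finally show ?thesis using e by simp
qed

lemma norm_mat: "norm (mat c :: cmat2) = sqrt 2 * cmod c"
proof -
  have "(norm (mat c :: cmat2))^2 = (sqrt 2 * cmod c)^2"
    unfolding normsq by (simp add: mat_def power_mult_distrib)
  then show ?thesis by (simp add: power2_eq_iff_nonneg)
qed

lemma norm_scale: assumes "\<And>i j. Y$i$j = u * (Z::cmat2)$i$j" shows "norm (Y::cmat2) = cmod u * norm Z"
proof -
  have "(norm Y)^2 = (cmod u * norm Z)^2"
    unfolding normsq power_mult_distrib assms norm_mult by (simp only: algebra_simps)
  then show ?thesis by (simp add: power2_eq_iff_nonneg)
qed

lemma mat_entry: "(mat c :: cmat2)$i$j = (if i = j then c else 0)"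
  by (simp add: mat_def)

lemma idem_ids:
  fixes X :: cmat2
  shows "trace (X ** X - X) = (trace X)^2 - trace X - 2 * det2 X"
    "det2 (X ** X - X) = det2 X * (det2 X - trace X + 1)"
    "(X ** X - X + mat (det2 X - trace X + 1))$i$j = (trace X - 1) * (X - mat 1)$i$j"
proof -
  show "trace (X ** X - X) = (trace X)^2 - trace X - 2 * det2 X"
    by (simp add: tr2 det2_def mm_entry power2_eq_square algebra_simps)
  show "det2 (X ** X - X) = det2 X * (det2 X - trace X + 1)"
    by (simp add: tr2 det2_def mm_entry power2_eq_square algebra_simps)
  show "(X ** X - X + mat (det2 X - trace X + 1))$i$j = (trace X - 1) * (X - mat 1)$i$j"
    using exhaust_2[of i] exhaust_2[of j]
    by (auto simp: tr2 det2_def mm_entry mat_entry algebra_simps)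
qed

lemma ringid1: "((t::complex)^2 - t - 2*d)^2 - 4*(d*(d-t+1)) = (t-1)^2*(1 - (t-1)^2 + 2*(t^2-t-2*d))"
  by (simp add: power2_eq_square algebra_simps)

lemma ringid2: "2 * ((d::complex) - t + 1) = (t - 1 - 1)^2 + (t - 1 - 1) - (t^2 - t - 2*d)"
  by (simp add: power2_eq_square algebra_simps)

lemma approxN:
  fixes X :: cmat2 and \<delta> :: real
  assumes d0: "0 \<le> \<delta>" "\<delta> < 3/100" and R: "norm (X ** X - X) \<le> \<delta>"
    and t2: "cmod (trace X - 2) < 19/20"
  shows "norm (X - mat 1) \<le> 5 * \<delta>"
proof -
  define R where "R = X ** X - X"
  define t where "t = trace X"
  define d where "d = det2 X"
  define u where "u = t - 1"
  define \<tau> where "\<tau> = trace R"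
  define D where "D = \<tau>^2 - 4 * det2 R"
  define q where "q = d - t + 1"
  have Rn: "norm R \<le> \<delta>" using R by (simp add: R_def)
  have "cmod \<tau> \<le> sqrt 2 * norm R" by (simp add: \<tau>_def tr_bound)
  moreover have "sqrt 2 * norm R \<le> sqrt 2 * \<delta>" by (rule mult_left_mono[OF Rn]) simp
  ultimately have tau: "cmod \<tau> \<le> sqrt 2 * \<delta>" by linarith
  have Db: "cmod D \<le> 2 * \<delta>^2"
  proof -
    have "(norm R)^2 \<le> \<delta>^2" using Rn by (intro power_mono) auto
    then show ?thesis using disc_bound[of R] by (simp add: D_def \<tau>_def)
  qed
  have tauE: "\<tau> = t^2 - t - 2*d" and rhoE: "det2 R = d * (d - t + 1)"
    using idem_ids(1,2)[of X] by (simp_all add: \<tau>_def R_def t_def d_def)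
  have De: "D = u^2 * (1 - u^2 + 2*\<tau>)"
    unfolding D_def rhoE u_def tauE by (rule ringid1)
  have s: "cmod (u - 1) \<le> 57/20 * \<delta>"
    by (rule scalarN[OF d0 tau Db De]) (use t2 in \<open>simp add: u_def t_def\<close>)
  have s2: "cmod (u - 1) \<le> 171/2000" using s d0 by linarith
  have "2 * q = (u - 1)^2 + (u - 1) - \<tau>"
    unfolding q_def tauE u_def by (rule ringid2)
  then have "cmod (2 * q) \<le> cmod ((u - 1)^2) + cmod (u - 1) + cmod \<tau>"
  proof -
    have "cmod ((u-1)^2 + (u-1) - \<tau>) \<le> cmod ((u-1)^2 + (u-1)) + cmod \<tau>" by (rule norm_triangle_ineq4)
    moreover have "cmod ((u-1)^2 + (u-1)) \<le> cmod ((u-1)^2) + cmod (u-1)" by (rule norm_triangle_ineq)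
    ultimately show ?thesis using \<open>2 * q = _\<close> by simp
  qed
  then have qb: "2 * cmod q \<le> cmod (u - 1) * cmod (u - 1) + cmod (u - 1) + cmod \<tau>"
    by (simp add: norm_mult power2_eq_square)
  have ss: "cmod (u - 1) * cmod (u - 1) \<le> (171/2000) * (57/20 * \<delta>)"
    using s s2 by (intro mult_mono) auto
  have "sqrt 2 * \<delta> \<le> 14143/10000 * \<delta>" using sqrt2_le d0(1) by (rule mult_right_mono)
  then have tau': "cmod \<tau> \<le> 14143/10000 * \<delta>" using tau by linarith
  have qb': "cmod q \<le> 2254/1000 * \<delta>" using qb ss s tau' d0 by linarith
  have ug: "cmod u \<ge> 1829/2000"
    using norm_triangle_ineq4[of u "u - 1"] s2 by simp
  have scale: "norm (R + mat q) = cmod u * norm (X - mat 1)"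
    unfolding R_def q_def d_def t_def u_def by (rule norm_scale) (rule idem_ids(3))
  have "norm (R + mat q) \<le> norm R + norm (mat q :: cmat2)" by (rule norm_triangle_ineq)
  moreover have "sqrt 2 * cmod q \<le> 14143/10000 * cmod q" using sqrt2_le by (rule mult_right_mono) simp
  moreover have "cmod u * norm (X - mat 1) \<ge> (1829/2000) * norm (X - mat 1)"
    using ug by (rule mult_right_mono) simp
  ultimately show ?thesis using scale Rn qb' d0 by (simp add: norm_mat)
qed


lemma rank_zero2: "rank (0::cmat2) = 0"
proof -
  have "rows (0::cmat2) = {0}" by (auto simp: rows_def row_def vec_eq_iff)
  moreover have "vec.dim {0::complex^2} = 0"
    by (metis vec.dim_span vec.span_insert_0 vec.dim_empty)
  ultimately show ?thesis by (simp add: row_rank_def_gen)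
qed

lemma rank_one2: "rank (mat 1::cmat2) = 2"
proof -
  have "rows (mat 1::cmat2) = cart_basis"
    by (auto simp: rows_def row_def cart_basis_def vec_eq_iff mat_def axis_def)
  then show ?thesis
    by (simp add: row_rank_def_gen vec.dim_eq_card_independent[OF independent_cart_basis] card_cart_basis)
qed

lemma mat_eq2: "(A::cmat2) = B \<longleftrightarrow> A$1$1 = B$1$1 \<and> A$1$2 = B$1$2 \<and> A$2$1 = B$2$1 \<and> A$2$2 = B$2$2"
  by (auto simp: vec_eq_iff forall_2)

lemma proj_facts:
  assumes PP: "P ** P = P" and rk: "rank P = 1"
  shows "trace P = 1" "det2 P = 0"
proof -
  define a where "a = P$1$1"
  define b where "b = P$1$2"
  define c where "c = P$2$1"
  define d where "d = P$2$2"
  have E: "a*a + b*c = a" "a*b + b*d = b" "c*a + d*c = c" "c*b + d*d = d"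
    using PP unfolding mat_eq2 by (auto simp: mm_entry a_def b_def c_def d_def)
  have nz: "P \<noteq> 0" using rk rank_zero2 by auto
  have ni: "P \<noteq> mat 1" using rk rank_one2 by auto
  have det0: "a*d - b*c = 0"
  proof (rule ccontr)
    assume H: "a*d - b*c \<noteq> 0"
    have e1: "(a + d - 1) * b = 0" using E(2) by (simp add: algebra_simps)
    have e2: "(a + d - 1) * c = 0" using E(3) by (simp add: algebra_simps)
    have e3: "(a + d - 1) * a = a*d - b*c" using E(1) by (simp add: algebra_simps)
    have e4: "(a + d - 1) * d = a*d - b*c" using E(4) by (simp add: algebra_simps)
    have t1: "a + d - 1 \<noteq> 0" using e3 H by auto
    then have "b = 0" "c = 0" using e1 e2 by auto
    with E have "a*a = a" "d*d = d" by auto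
    moreover have "a \<noteq> 0" "d \<noteq> 0" using H \<open>b = 0\<close> by auto
    ultimately have "a = 1" "d = 1" by (metis mult_cancel_right1 mult.commute)+
    then have "P = mat 1" using \<open>b = 0\<close> \<open>c = 0\<close>
      unfolding mat_eq2 by (simp add: a_def b_def c_def d_def mat_def)
    with ni show False by simp
  qed
  then show "det2 P = 0" by (simp add: det2_def a_def b_def c_def d_def)
  have e: "(a + d - 1) * a = 0" "(a + d - 1) * b = 0" "(a + d - 1) * c = 0" "(a + d - 1) * d = 0"
    using E det0 by (simp_all add: algebra_simps)
  have "a \<noteq> 0 \<or> b \<noteq> 0 \<or> c \<noteq> 0 \<or> d \<noteq> 0"
    using nz unfolding mat_eq2 by (auto simp: a_def b_def c_def d_def)
  then have "a + d - 1 = 0" using e by auto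
  then show "trace P = 1" by (simp add: tr2 a_def d_def)
qed

lemma projQ:
  fixes Q :: cmat2
  assumes tQ: "trace Q = 1" and dQ: "det2 Q = 0"
  shows "norm Q \<ge> 1" "norm (mat 1 - Q) = norm Q" "norm (mat 1 - Q - Q) \<ge> sqrt 2 * norm Q"
    "trace (mat 1 - Q) = 1" "det2 (mat 1 - Q) = 0"
proof -
  define a where "a = Q$1$1"
  define b where "b = Q$1$2"
  define c where "c = Q$2$1"
  define d where "d = Q$2$2"
  have ad: "a + d = 1" using tQ by (simp add: tr2 a_def d_def)
  have bc: "b * c = a * d" using dQ by (simp add: det2_def a_def b_def c_def d_def)
  have re: "Re a + Re d = 1" using arg_cong[OF ad, of Re] by simp
  have im: "Im a + Im d = 0" using arg_cong[OF ad, of Im] by simp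
  have ns: "(norm Q)^2 = (cmod a)^2 + (cmod b)^2 + (cmod c)^2 + (cmod d)^2"
    by (simp add: normsq a_def b_def c_def d_def)
  have "cmod b * cmod c = cmod a * cmod d" using bc by (metis norm_mult)
  moreover have "1 \<le> (cmod a + cmod d)^2"
  proof -
    have "1 = cmod (a + d)" using ad by simp
    also have "\<dots> \<le> cmod a + cmod d" by (rule norm_triangle_ineq)
    finally have "1 \<le> cmod a + cmod d" .
    then show ?thesis by (metis one_le_power)
  qed
  moreover have "0 \<le> (cmod b - cmod c)^2" by simp
  ultimately have "1 \<le> (norm Q)^2" unfolding ns by (simp add: power2_eq_square algebra_simps)
  then show n1: "norm Q \<ge> 1" by (metis abs_norm_cancel one_le_power power2_le_imp_le norm_ge_zero one_power2)
  have "(norm (mat 1 - Q))^2 = (norm Q)^2"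
    unfolding ns normsq cmod_power2 using re im
    by (simp add: mat_entry a_def b_def c_def d_def power2_eq_square algebra_simps)
  then show "norm (mat 1 - Q) = norm Q" by (simp add: power2_eq_iff_nonneg)
  have "(norm (mat 1 - Q - Q))^2 = 4 * (norm Q)^2 - 2"
    unfolding ns normsq cmod_power2 using re im
    by (simp add: mat_entry a_def b_def c_def d_def power2_eq_square algebra_simps)
  also have "\<dots> \<ge> (sqrt 2 * norm Q)^2"
    using \<open>1 \<le> (norm Q)^2\<close> by (simp add: power_mult_distrib)
  finally show "norm (mat 1 - Q - Q) \<ge> sqrt 2 * norm Q"
    by (rule power2_le_imp_le) simp
  show "trace (mat 1 - Q) = 1" using tQ by (simp add: tr2 mat_entry algebra_simps)
  show "det2 (mat 1 - Q) = 0" using tQ dQ by (simp add: tr2 det2_def mat_entry algebra_simps)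
qed

lemma sqrt2_ge: "sqrt 2 \<ge> 14142/10000"
  by (rule real_le_rsqrt) (simp add: power2_eq_square)

lemma approxN0:
  fixes X :: cmat2 and \<delta> :: real
  assumes d0: "0 \<le> \<delta>" "\<delta> < 3/100" and R: "norm (X ** X - X) \<le> \<delta>"
    and t0: "cmod (trace X) < 19/20"
  shows "norm X \<le> 5 * \<delta>"
proof -
  define Y where "Y = mat 1 - X"
  have "Y ** Y - Y = X ** X - X"
    unfolding mat_eq2 Y_def by (simp add: mm_entry mat_entry algebra_simps)
  then have RY: "norm (Y ** Y - Y) \<le> \<delta>" using R by simp
  have "trace Y - 2 = - trace X" by (simp add: Y_def tr2 mat_entry)
  then have tY: "cmod (trace Y - 2) < 19/20" using t0 by simp
  have "norm (Y - mat 1) \<le> 5 * \<delta>" by (rule approxN[OF d0 RY tY])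
  moreover have "Y - mat 1 = - X" by (simp add: Y_def)
  ultimately show ?thesis by simp
qed

lemma approxT:
  fixes X :: cmat2 and \<delta> :: real
  assumes d0: "0 \<le> \<delta>" "\<delta> < 3/100" and R: "norm (X ** X - X) \<le> \<delta>"
  shows "cmod (trace X) < 19/20 \<or> cmod (trace X - 1) < 19/20 \<or> cmod (trace X - 2) < 19/20"
proof -
  define R where "R = X ** X - X"
  define t where "t = trace X"
  define d where "d = det2 X"
  define u where "u = t - 1"
  define \<tau> where "\<tau> = trace R"
  define D where "D = \<tau>^2 - 4 * det2 R"
  have Rn: "norm R \<le> \<delta>" using R by (simp add: R_def)
  have "cmod \<tau> \<le> sqrt 2 * norm R" by (simp add: \<tau>_def tr_bound)
  moreover have "sqrt 2 * norm R \<le> sqrt 2 * \<delta>" by (rule mult_left_mono[OF Rn]) simp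
  ultimately have tau: "cmod \<tau> \<le> sqrt 2 * \<delta>" by linarith
  have Db: "cmod D \<le> 2 * \<delta>^2"
  proof -
    have "(norm R)^2 \<le> \<delta>^2" using Rn by (intro power_mono) auto
    then show ?thesis using disc_bound[of R] by (simp add: D_def \<tau>_def)
  qed
  have tauE: "\<tau> = t^2 - t - 2*d" and rhoE: "det2 R = d * (d - t + 1)"
    using idem_ids(1,2)[of X] by (simp_all add: \<tau>_def R_def t_def d_def)
  have De: "D = u^2 * (1 - u^2 + 2*\<tau>)"
    unfolding D_def rhoE u_def tauE by (rule ringid1)
  have "cmod (u + 1) < 19/20 \<or> cmod u < 19/20 \<or> cmod (u - 1) < 19/20"
    by (rule scalarT[OF d0 tau Db De])
  then show ?thesis by (simp add: u_def t_def algebra_simps)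
qed



lemma sub_mm: "(A - mat 1) ** (F::cmat2) = A ** F - F"
  unfolding mat_eq2 by (simp add: mm_entry mat_entry algebra_simps)

lemma core:
  fixes \<theta> :: "'a::ab_semigroup_mult \<Rightarrow> cmat2" and \<delta> :: real and Q :: cmat2 and e f :: 'a
  assumes idem: "\<And>x::'a. x * x = x"
    and d0: "0 \<le> \<delta>" "\<delta> < 3/100"
    and approx: "\<And>x y. norm (\<theta> x ** \<theta> y - \<theta> (x * y)) \<le> \<delta>"
    and tQ: "trace Q = 1" and dQ: "det2 Q = 0"
    and S1: "\<And>x. cmod (trace (\<theta> x) - 1) < 19/20 \<Longrightarrow> norm (Q - \<theta> x) \<le> 12 * \<delta> \<or> norm ((mat 1 - Q) - \<theta> x) \<le> 12 * \<delta>"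
    and e: "cmod (trace (\<theta> e) - 2) < 19/20"
    and f: "norm (Q - \<theta> f) \<le> 12 * \<delta>"
  shows "norm (Q - \<theta> (e * f)) \<le> 12 * \<delta>"
proof -
  define A where "A = \<theta> e"
  define F where "F = \<theta> f"
  define G where "G = \<theta> (e * f)"
  define p where "p = norm Q"
  define nF where "nF = norm F"
  note PQ = projQ[OF tQ dQ]
  have p1: "p \<ge> 1" using PQ(1) by (simp add: p_def)
  have AA: "norm (A ** A - A) \<le> \<delta>" using approx[of e e] by (simp add: A_def idem)
  have nA: "norm (A - mat 1) \<le> 5 * \<delta>" using approxN[OF d0 AA] e by (simp add: A_def)
  have fQ: "norm (F - Q) \<le> 12 * \<delta>" using f by (simp add: F_def norm_minus_commute)
  have nF1: "nF \<le> p + 12 * \<delta>" "nF \<ge> p - 12 * \<delta>"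
    using norm_triangle_ineq2[of F Q] norm_triangle_ineq2[of Q F] fQ f
    by (auto simp: nF_def p_def F_def)
  have AF: "norm (A ** F - G) \<le> \<delta>" using approx[of e f] by (simp add: A_def F_def G_def)
  have AmF: "norm (A ** F - F) \<le> 5 * (\<delta> * nF)"
  proof -
    have "norm (A ** F - F) \<le> norm (A - mat 1) * norm F"
      unfolding sub_mm[symmetric] by (rule norm_mm)
    also have "\<dots> \<le> 5 * \<delta> * norm F" using nA by (intro mult_right_mono) auto
    finally show ?thesis by (simp add: nF_def)
  qed
  have GF: "norm (G - F) \<le> \<delta> + 5 * (\<delta> * nF)"
    using norm_triangle_ineq[of "G - A ** F" "A ** F - F"] AF AmF
    by (simp add: norm_minus_commute)
  have dF: "\<delta> * nF \<le> 3/100 * nF" using d0 by (intro mult_right_mono) (auto simp: nF_def)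
  have dp: "\<delta> * p \<le> 3/100 * p" using d0 by (intro mult_right_mono) (auto simp: p_def)
  have GG: "norm (G ** G - G) \<le> \<delta>" using approx[of "e*f" "e*f"] by (simp add: G_def idem)
  have FG: "norm (F ** G - G) \<le> \<delta>"
  proof -
    have "f * (e * f) = e * (f * f)" by (rule mult.left_commute)
    then have "f * (e * f) = e * f" by (simp add: idem)
    then show ?thesis using approx[of f "e*f"] by (simp add: F_def G_def)
  qed
  from approxT[OF d0 GG] show ?thesis
  proof (elim disjE)
    assume t0: "cmod (trace G) < 19/20"
    have nG: "norm G \<le> 5 * \<delta>" by (rule approxN0[OF d0 GG t0])
    have "norm (A ** F - (A ** F - F)) \<le> norm (A ** F) + norm (A ** F - F)"
      by (rule norm_triangle_ineq4)
    then have "nF \<le> norm (A ** F) + norm (A ** F - F)" by (simp add: nF_def)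
    moreover have "norm (A ** F) \<le> norm G + \<delta>"
      using norm_triangle_ineq[of "A ** F - G" G] AF by simp
    ultimately show ?thesis using nG AmF dF nF1 p1 d0 by linarith
  next
    assume t2: "cmod (trace G - 2) < 19/20"
    have nG: "norm (G - mat 1) \<le> 5 * \<delta>" by (rule approxN[OF d0 GG t2])
    define m where "m = norm (F - mat 1)"
    have eqF: "F - mat 1 = (F ** G - G) + (G - mat 1) - F ** (G - mat 1)"
      unfolding mat_eq2 by (simp add: mm_entry mat_entry algebra_simps)
    moreover have "norm ((F ** G - G) + (G - mat 1) - F ** (G - mat 1)) \<le> norm ((F ** G - G) + (G - mat 1)) + norm (F ** (G - mat 1))"
      by (rule norm_triangle_ineq4)
    moreover have "norm ((F ** G - G) + (G - mat 1)) \<le> norm (F ** G - G) + norm (G - mat 1)"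
      by (rule norm_triangle_ineq)
    ultimately have "m \<le> norm (F ** G - G) + norm (G - mat 1) + norm (F ** (G - mat 1))"
      unfolding m_def by (simp only: eqF[symmetric])
    moreover have "norm (F ** (G - mat 1)) \<le> nF * (5 * \<delta>)"
    proof -
      have "nF * norm (G - mat 1) \<le> nF * (5 * \<delta>)" using nG by (intro mult_left_mono) (auto simp: nF_def)
      then show ?thesis using norm_mm[of F "G - mat 1"] by (simp add: nF_def)
    qed
    moreover have "nF \<le> m + sqrt 2"
      using norm_triangle_ineq[of "F - mat 1" "mat 1"] by (simp add: m_def nF_def norm_mat)
    moreover have "p \<le> m + 12 * \<delta>"
    proof -
      have "norm (mat 1 - Q) \<le> norm (mat 1 - F) + norm (F - Q)"
        using norm_triangle_ineq[of "mat 1 - F" "F - Q"] by simp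
      then show ?thesis using PQ(2) fQ by (simp add: p_def m_def norm_minus_commute)
    qed
    ultimately show ?thesis using FG nG dF p1 d0 sqrt2_le by (simp add: algebra_simps; linarith)
  next
    assume t1: "cmod (trace G - 1) < 19/20"
    from S1[of "e*f"] t1 have "norm (Q - G) \<le> 12 * \<delta> \<or> norm ((mat 1 - Q) - G) \<le> 12 * \<delta>"
      by (simp add: G_def)
    then show ?thesis
    proof
      assume "norm (Q - G) \<le> 12 * \<delta>" then show ?thesis by (simp add: G_def)
    next
      assume H: "norm ((mat 1 - Q) - G) \<le> 12 * \<delta>"
      have eqQ: "mat 1 - Q - Q = ((mat 1 - Q) - G) + (G - F) + (F - Q)" by simp
      moreover have "norm (((mat 1 - Q) - G) + (G - F) + (F - Q)) \<le> norm (((mat 1 - Q) - G) + (G - F)) + norm (F - Q)"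
        by (rule norm_triangle_ineq)
      moreover have "norm (((mat 1 - Q) - G) + (G - F)) \<le> norm ((mat 1 - Q) - G) + norm (G - F)"
        by (rule norm_triangle_ineq)
      ultimately have "norm (mat 1 - Q - Q) \<le> norm ((mat 1 - Q) - G) + norm (G - F) + norm (F - Q)"
        by (simp only: eqQ[symmetric] ; linarith)
      moreover have "sqrt 2 * p \<ge> 14142/10000 * p" using sqrt2_ge p1 by (intro mult_right_mono) auto
      moreover have "\<delta> * \<delta> \<le> 3/100 * \<delta>" using d0 by (intro mult_right_mono) auto
      moreover have "\<delta> * nF \<le> \<delta> * (p + 12 * \<delta>)" using nF1 d0 by (intro mult_left_mono) auto
      ultimately show ?thesis using PQ(3) H GF fQ dp d0 p1
        by (simp add: p_def algebra_simps; linarith)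
    qed
  qed
qed

theorem propositionp:
  fixes \<theta> :: "'a::ab_semigroup_mult \<Rightarrow> cmat2" and \<delta> :: real and P :: cmat2 and e f :: 'a
  assumes idem: "\<And>x::'a. x * x = x"
    and delta: "0 \<le> \<delta>" "\<delta> < 0.03"
    and approx: "\<And>x y. hs_norm (\<theta> x ** \<theta> y - \<theta> (x * y)) \<le> \<delta>"
    and P_idem: "P ** P = P" and P_rank: "rank P = 1"
    and S1: "\<theta> ` Sk \<theta> 1 \<subseteq> closed_hs_ball P (12 * \<delta>) \<union> closed_hs_ball (mat 1 - P) (12 * \<delta>)"
    and e: "e \<in> Sk \<theta> 2"
  shows "(f \<in> \<theta> -` closed_hs_ball P (12 * \<delta>) \<longrightarrow> e * f \<in> \<theta> -` closed_hs_ball P (12 * \<delta>))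
       \<and> (f \<in> \<theta> -` closed_hs_ball (mat 1 - P) (12 * \<delta>) \<longrightarrow> e * f \<in> \<theta> -` closed_hs_ball (mat 1 - P) (12 * \<delta>))"
proof -
  have d0: "0 \<le> \<delta>" "\<delta> < 3/100" using delta by simp_all
  have approx': "\<And>x y. norm (\<theta> x ** \<theta> y - \<theta> (x * y)) \<le> \<delta>"
    using approx by (simp add: hs_eq)
  note tP = proj_facts[OF P_idem P_rank]
  note tP' = projQ(4,5)[OF tP]
  have e': "cmod (trace (\<theta> e) - 2) < 19/20" using e by (simp add: Sk_def)
  have S1': "norm (P - \<theta> x) \<le> 12 * \<delta> \<or> norm ((mat 1 - P) - \<theta> x) \<le> 12 * \<delta>"
    if "cmod (trace (\<theta> x) - 1) < 19/20" for x
  proof -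
    have "x \<in> Sk \<theta> 1" using that by (simp add: Sk_def)
    then have "\<theta> x \<in> closed_hs_ball P (12 * \<delta>) \<union> closed_hs_ball (mat 1 - P) (12 * \<delta>)" using S1 by blast
    then show ?thesis by (simp add: closed_hs_ball_def hs_eq)
  qed
  have S1'': "norm ((mat 1 - P) - \<theta> x) \<le> 12 * \<delta> \<or> norm ((mat 1 - (mat 1 - P)) - \<theta> x) \<le> 12 * \<delta>"
    if "cmod (trace (\<theta> x) - 1) < 19/20" for x
    using S1'[OF that] by auto
  show ?thesis
    unfolding closed_hs_ball_def vimage_def hs_eq mem_Collect_eq
  proof (intro conjI impI)
    assume "norm (P - \<theta> f) \<le> 12 * \<delta>"
    then show "norm (P - \<theta> (e * f)) \<le> 12 * \<delta>"
      using core[OF idem d0 approx' tP(1) tP(2) S1' e'] by simp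
  next
    assume "norm (mat 1 - P - \<theta> f) \<le> 12 * \<delta>"
    then show "norm (mat 1 - P - \<theta> (e * f)) \<le> 12 * \<delta>"
      using core[OF idem d0 approx' tP'(1) tP'(2) S1'' e'] by simp
  qed
qed

end
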